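(* Let a group $G$ act on a connected weighted simplicial complex $\Omega$ on $[n]$ and let $d_0,\ldots,d_n$ be positive integers with $d_i=d_j$ whenever $i,j$ lie in the same $G$-orbit. Then for every $M\in\mathbb C^{d_0}\otimes\cdots\otimes\mathbb C^{d_n}$: (i) ${\rm rank}_{(\Omega,G)}(M)\leq{\rm nn\text{-}rank}_{(\Omega,G)}(M)$; (ii) ${\rm psd\text{-}rank}_{(\Omega,G)}(M)\leq{\rm nn\text{-}rank}_{(\Omega,G)}(M)$; (iii) ${\rm rank}_{(\Omega,G)}(M)\leq{\rm psd\text{-}rank}_{(\Omega,G)}(M)^2$.
   Context: Write $M=\sum_{i_0,\ldots,i_n}m_{i_0\ldots i_n}e_{i_0}\otimes\cdots\otimes e_{i_n}$ with standard basis vectors $e_j$. $[n]=\{0,\ldots,n\}$. A weighted simplicial complex (wsc) on $[n]$ is a function $\Omega\colon\mathcal P([n])\to\mathbb N=\{0,1,\ldots\}$ with $S_1\subseteq S_2\Rightarrow\Omega(S_1)\mid\Omega(S_2)$; simplices have $\Omega(S)\neq0$, singletons are simplices, facets are inclusion-maximal simplices, $\mathcal F$ the set of facets, $\widetilde{\mathcal F}$ the multiset containing each facet $F$ exactly $\Omega(F)$ times with collapse map $c$, $\widetilde{\mathcal F}_i$ the copies of facets containing $i$. $\Omega$ is connected if any two vertices are joined by a chain of vertices in which consecutive ones share a facet. A group action of $G$ on $\Omega$ is an action on $[n]$ with $\Omega(gS)=\Omega(S)$, plus an action on $\widetilde{\mathcal F}$ with $c(gx)=gc(x)$. For $\beta\colon\widetilde{\mathcal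 F}_i\to\mathcal I$, ${}^g\beta\colon\widetilde{\mathcal F}_{gi}\to\mathcal I$ is $x\mapsto\beta(g^{-1}x)$; $\alpha_{\mid i}$ is restriction of $\alpha\colon\widetilde{\mathcal F}\to\mathcal I$ to $\widetilde{\mathcal F}_i$. An $(\Omega,G)$-decomposition of $M$ is a finite set $\mathcal I$ and local vectors $w^{[i]}_\beta\in\mathbb C^{d_i}$ ($\beta\in\mathcal I^{\widetilde{\mathcal F}_i}$) with $M=\sum_{\alpha\in\mathcal I^{\widetilde{\mathcal F}}}w^{[0]}_{\alpha_{\mid0}}\otimes\cdots\otimes w^{[n]}_{\alpha_{\mid n}}$ and $w^{[i]}_\beta=w^{[gi]}_{{}^g\beta}$ for all $i,g,\beta$; ${\rm rank}_{(\Omega,G)}(M)$ is the minimal $|\mathcal I|$. ${\rm nn\text{-}rank}_{(\Omega,G)}(M)$ is the minimal $|\mathcal I|$ over such decompositions whose local vectors have real nonnegative entries. A positive semidefinite $(\Omega,G)$-decomposition of $M$ is a finite set $\mathcal I$ and psd matrices $E^{[i]}_j\in{\rm Mat}_{\mathcal I^{\widetilde{\mathcal F}_i}}(\mathbb C)$ ($i\in[n]$, $j=1,\ldots,d_i$) with $(E^{[gi]}_j)_{{}^g\beta,{}^g\beta'}=(E^{[i]}_j)_{\beta,\beta'}$ for all $i,g,j,\beta,\beta'$ and $m_{i_0\ldots i_n}=\sum_{\alpha,\alpha'\in\mathcal I^{\widetilde{\mathcal F}}}\prod_{k=0}^n(E^{[k]}_{i_k})_{\alpha_{\mid k},\alpha'_{\mid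 k}}$ for all $i_0,\ldots,i_n$; ${\rm psd\text{-}rank}_{(\Omega,G)}(M)$ is the minimal $|\mathcal I|$. Each rank is $\infty$ if no corresponding decomposition exists. *)

theory Defs
  imports "HOL-Algebra.Group_Action" "HOL-Library.Extended_Nat"
begin

(* Vertices are 0..n. A wsc is Omega :: nat set => nat, only consulted on subsets of {..n}. *)
definition wsc :: "nat \<Rightarrow> (nat set \<Rightarrow> nat) \<Rightarrow> bool" where
  "wsc n \<Omega> \<longleftrightarrow> (\<forall>S1 S2. S1 \<subseteq> S2 \<and> S2 \<subseteq> {..n} \<longrightarrow> \<Omega> S1 dvd \<Omega> S2)
                 \<and> (\<forall>i\<le>n. \<Omega> {i} \<noteq> 0)"

definition simplex :: "nat \<Rightarrow> (nat set \<Rightarrow> nat) \<Rightarrow> nat set \<Rightarrow> bool" where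
  "simplex n \<Omega> S \<longleftrightarrow> S \<subseteq> {..n} \<and> \<Omega> S \<noteq> 0"

definition facets :: "nat \<Rightarrow> (nat set \<Rightarrow> nat) \<Rightarrow> nat set set" where
  "facets n \<Omega> = {F. simplex n \<Omega> F \<and> (\<forall>S. simplex n \<Omega> S \<and> F \<subseteq> S \<longrightarrow> S = F)}"

(* multiset of facets: facet F appears as copies (F,0),...,(F,Omega F - 1); collapse map is fst *)
definition Ftilde :: "nat \<Rightarrow> (nat set \<Rightarrow> nat) \<Rightarrow> (nat set \<times> nat) set" where
  "Ftilde n \<Omega> = {(F, k). F \<in> facets n \<Omega> \<and> k < \<Omega> F}"

definition Ftilde_at :: "nat \<Rightarrow> (nat set \<Rightarrow> nat) \<Rightarrow> nat \<Rightarrow> (nat set \<times> nat) set" where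
  "Ftilde_at n \<Omega> i = {x \<in> Ftilde n \<Omega>. i \<in> fst x}"

definition wsc_connected :: "nat \<Rightarrow> (nat set \<Rightarrow> nat) \<Rightarrow> bool" where
  "wsc_connected n \<Omega> \<longleftrightarrow>
     (\<forall>i\<le>n. \<forall>j\<le>n. (\<lambda>a b. \<exists>F\<in>facets n \<Omega>. a \<in> F \<and> b \<in> F)\<^sup>*\<^sup>* i j)"

definition wsc_group_action ::
  "nat \<Rightarrow> (nat set \<Rightarrow> nat) \<Rightarrow> ('g, 'm) monoid_scheme \<Rightarrow> ('g \<Rightarrow> nat \<Rightarrow> nat)
    \<Rightarrow> ('g \<Rightarrow> nat set \<times> nat \<Rightarrow> nat set \<times> nat) \<Rightarrow> bool" where
  "wsc_group_action n \<Omega> G \<phi> \<psi> \<longleftrightarrow>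
     wsc n \<Omega> \<and> group_action G {..n} \<phi>
     \<and> (\<forall>g\<in>carrier G. \<forall>S. S \<subseteq> {..n} \<longrightarrow> \<Omega> (\<phi> g ` S) = \<Omega> S)
     \<and> group_action G (Ftilde n \<Omega>) \<psi>
     \<and> (\<forall>g\<in>carrier G. \<forall>x\<in>Ftilde n \<Omega>. fst (\<psi> g x) = \<phi> g ` fst x)"

(* index set I = {..<r}; local index beta : Ftilde_i -> I *)
definition loc_idx :: "nat \<Rightarrow> (nat set \<Rightarrow> nat) \<Rightarrow> nat \<Rightarrow> nat \<Rightarrow> ((nat set \<times> nat) \<Rightarrow> nat) set" where
  "loc_idx n \<Omega> r i = Ftilde_at n \<Omega> i \<rightarrow>\<^sub>E {..<r}"

definition glob_idx :: "nat \<Rightarrow> (nat set \<Rightarrow> nat) \<Rightarrow> nat \<Rightarrow> ((nat set \<times> nat) \<Rightarrow> nat) set" where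
  "glob_idx n \<Omega> r = Ftilde n \<Omega> \<rightarrow>\<^sub>E {..<r}"

definition res :: "nat \<Rightarrow> (nat set \<Rightarrow> nat) \<Rightarrow> ((nat set \<times> nat) \<Rightarrow> nat) \<Rightarrow> nat \<Rightarrow> ((nat set \<times> nat) \<Rightarrow> nat)" where
  "res n \<Omega> \<alpha> i = restrict \<alpha> (Ftilde_at n \<Omega> i)"

definition gact ::
  "nat \<Rightarrow> (nat set \<Rightarrow> nat) \<Rightarrow> ('g, 'm) monoid_scheme \<Rightarrow> ('g \<Rightarrow> nat \<Rightarrow> nat)
    \<Rightarrow> ('g \<Rightarrow> nat set \<times> nat \<Rightarrow> nat set \<times> nat) \<Rightarrow> 'g \<Rightarrow> nat
    \<Rightarrow> ((nat set \<times> nat) \<Rightarrow> nat) \<Rightarrow> ((nat set \<times> nat) \<Rightarrow> nat)" where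
  "gact n \<Omega> G \<phi> \<psi> g i \<beta> = restrict (\<lambda>x. \<beta> (\<psi> (inv\<^bsub>G\<^esub> g) x)) (Ftilde_at n \<Omega> (\<phi> g i))"

(* multi-indices (i_0,...,i_n) of C^{d_0} (x) ... (x) C^{d_n}; tensors are M :: (nat => nat) => complex *)
definition tidx :: "nat \<Rightarrow> (nat \<Rightarrow> nat) \<Rightarrow> (nat \<Rightarrow> nat) set" where
  "tidx n d = PiE {..n} (\<lambda>k. {..<d k})"

(* (Omega,G)-decomposition with I = {..<r}; local vectors w i beta in C^{d i} (entries j < d i) *)
definition is_decomp ::
  "nat \<Rightarrow> (nat set \<Rightarrow> nat) \<Rightarrow> ('g, 'm) monoid_scheme \<Rightarrow> ('g \<Rightarrow> nat \<Rightarrow> nat)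
    \<Rightarrow> ('g \<Rightarrow> nat set \<times> nat \<Rightarrow> nat set \<times> nat) \<Rightarrow> (nat \<Rightarrow> nat) \<Rightarrow> ((nat \<Rightarrow> nat) \<Rightarrow> complex)
    \<Rightarrow> nat \<Rightarrow> (nat \<Rightarrow> ((nat set \<times> nat) \<Rightarrow> nat) \<Rightarrow> nat \<Rightarrow> complex) \<Rightarrow> bool" where
  "is_decomp n \<Omega> G \<phi> \<psi> d M r w \<longleftrightarrow>
     (\<forall>idx\<in>tidx n d. M idx =
        (\<Sum>\<alpha>\<in>glob_idx n \<Omega> r. \<Prod>k\<le>n. w k (res n \<Omega> \<alpha> k) (idx k)))
   \<and> (\<forall>i\<le>n. \<forall>g\<in>carrier G. \<forall>\<beta>\<in>loc_idx n \<Omega> r i. \<forall>j<d i.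
        w i \<beta> j = w (\<phi> g i) (gact n \<Omega> G \<phi> \<psi> g i \<beta>) j)"

definition is_nn_decomp ::
  "nat \<Rightarrow> (nat set \<Rightarrow> nat) \<Rightarrow> ('g, 'm) monoid_scheme \<Rightarrow> ('g \<Rightarrow> nat \<Rightarrow> nat)
    \<Rightarrow> ('g \<Rightarrow> nat set \<times> nat \<Rightarrow> nat set \<times> nat) \<Rightarrow> (nat \<Rightarrow> nat) \<Rightarrow> ((nat \<Rightarrow> nat) \<Rightarrow> complex)
    \<Rightarrow> nat \<Rightarrow> (nat \<Rightarrow> ((nat set \<times> nat) \<Rightarrow> nat) \<Rightarrow> nat \<Rightarrow> complex) \<Rightarrow> bool" where
  "is_nn_decomp n \<Omega> G \<phi> \<psi> d M r w \<longleftrightarrow>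
     is_decomp n \<Omega> G \<phi> \<psi> d M r w
   \<and> (\<forall>i\<le>n. \<forall>\<beta>\<in>loc_idx n \<Omega> r i. \<forall>j<d i. Im (w i \<beta> j) = 0 \<and> 0 \<le> Re (w i \<beta> j))"

definition psd_on :: "'a set \<Rightarrow> ('a \<Rightarrow> 'a \<Rightarrow> complex) \<Rightarrow> bool" where
  "psd_on A B \<longleftrightarrow> (\<forall>x\<in>A. \<forall>y\<in>A. B y x = cnj (B x y))
     \<and> (\<forall>v. let q = (\<Sum>x\<in>A. \<Sum>y\<in>A. cnj (v x) * B x y * v y) in Im q = 0 \<and> 0 \<le> Re q)"

(* psd (Omega,G)-decomposition with I = {..<r}; E i j is E^{[i]}_{j+1} (0-based j < d i) *)
definition is_psd_decomp ::
  "nat \<Rightarrow> (nat set \<Rightarrow> nat) \<Rightarrow> ('g, 'm) monoid_scheme \<Rightarrow> ('g \<Rightarrow> nat \<Rightarrow> nat)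
    \<Rightarrow> ('g \<Rightarrow> nat set \<times> nat \<Rightarrow> nat set \<times> nat) \<Rightarrow> (nat \<Rightarrow> nat) \<Rightarrow> ((nat \<Rightarrow> nat) \<Rightarrow> complex)
    \<Rightarrow> nat \<Rightarrow> (nat \<Rightarrow> nat \<Rightarrow> ((nat set \<times> nat) \<Rightarrow> nat) \<Rightarrow> ((nat set \<times> nat) \<Rightarrow> nat) \<Rightarrow> complex)
    \<Rightarrow> bool" where
  "is_psd_decomp n \<Omega> G \<phi> \<psi> d M r E \<longleftrightarrow>
     (\<forall>i\<le>n. \<forall>j<d i. psd_on (loc_idx n \<Omega> r i) (E i j))
   \<and> (\<forall>i\<le>n. \<forall>g\<in>carrier G. \<forall>j<d i. \<forall>\<beta>\<in>loc_idx n \<Omega> r i. \<forall>\<beta>'\<in>loc_idx n \<Omega> r i.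
        E (\<phi> g i) j (gact n \<Omega> G \<phi> \<psi> g i \<beta>) (gact n \<Omega> G \<phi> \<psi> g i \<beta>') = E i j \<beta> \<beta>')
   \<and> (\<forall>idx\<in>tidx n d. M idx =
        (\<Sum>\<alpha>\<in>glob_idx n \<Omega> r. \<Sum>\<alpha>'\<in>glob_idx n \<Omega> r.
           \<Prod>k\<le>n. E k (idx k) (res n \<Omega> \<alpha> k) (res n \<Omega> \<alpha>' k)))"

(* ranks: minimal |I|, infinity if no decomposition exists (Inf {} = \<infinity> in enat) *)
definition rank_OG where
  "rank_OG n \<Omega> G \<phi> \<psi> d M = Inf (enat ` {r. \<exists>w. is_decomp n \<Omega> G \<phi> \<psi> d M r w})"

definition nn_rank_OG where
  "nn_rank_OG n \<Omega> G \<phi> \<psi> d M = Inf (enat ` {r. \<exists>w. is_nn_decomp n \<Omega> G \<phi> \<psi> d M r w})"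

definition psd_rank_OG where
  "psd_rank_OG n \<Omega> G \<phi> \<psi> d M = Inf (enat ` {r. \<exists>E. is_psd_decomp n \<Omega> G \<phi> \<psi> d M r E})"

end

theory Submission imports Defs begin

lemma inf_sq: "(\<infinity>::enat)^2 = \<infinity>" by (simp add: power2_eq_square)

lemma Ftilde_at_sub: "Ftilde_at n \<Omega> i \<subseteq> Ftilde n \<Omega>"
  unfolding Ftilde_at_def by auto

lemma facet_vertex:
  assumes "wsc n \<Omega>" "x \<in> Ftilde n \<Omega>"
  shows "\<exists>k\<le>n. x \<in> Ftilde_at n \<Omega> k"
proof -
  obtain F c where x: "x = (F, c)" "F \<in> facets n \<Omega>" using assms(2) unfolding Ftilde_def by auto
  have sF: "simplex n \<Omega> F" and max: "\<And>S. simplex n \<Omega> S \<Longrightarrow> F \<subseteq> S \<Longrightarrow> S = F"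
    using x(2) unfolding facets_def by auto
  have "F \<noteq> {}"
  proof
    assume "F = {}"
    have "simplex n \<Omega> {0}" using assms(1) unfolding simplex_def wsc_def by auto
    then have "{0} = F" using max \<open>F = {}\<close> by blast
    then show False using \<open>F = {}\<close> by auto
  qed
  then obtain k where "k \<in> F" by auto
  moreover have "F \<subseteq> {..n}" using sF unfolding simplex_def by auto
  ultimately show ?thesis using assms(2) x unfolding Ftilde_at_def by auto
qed

locale wga =
  fixes n \<Omega> and G :: "('g,'m) monoid_scheme" and \<phi> \<psi>
  assumes wga: "wsc_group_action n \<Omega> G \<phi> \<psi>"
begin

lemma ga1: "group_action G {..n} \<phi>" using wga unfolding wsc_group_action_def by auto
lemma ga2: "group_action G (Ftilde n \<Omega>) \<psi>" using wga unfolding wsc_group_action_def by auto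
lemma fstpsi: "g \<in> carrier G \<Longrightarrow> x \<in> Ftilde n \<Omega> \<Longrightarrow> fst (\<psi> g x) = \<phi> g ` fst x"
  using wga unfolding wsc_group_action_def by auto
lemma grp: "group G" using ga1 unfolding group_action_def group_hom_def by auto
lemma wsc: "wsc n \<Omega>" using wga unfolding wsc_group_action_def by auto

lemma phi_le: "g \<in> carrier G \<Longrightarrow> i \<le> n \<Longrightarrow> \<phi> g i \<le> n"
  using group_action.element_image[OF ga1] by blast

lemma map_fwd:
  assumes g: "g \<in> carrier G" and i: "i \<le> n" and y: "y \<in> Ftilde_at n \<Omega> i"
  shows "\<psi> g y \<in> Ftilde_at n \<Omega> (\<phi> g i)" "\<psi> (inv\<^bsub>G\<^esub> g) (\<psi> g y) = y"
proof -
  have yF: "y \<in> Ftilde n \<Omega>" "i \<in> fst y" using y unfolding Ftilde_at_def by auto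
  have "\<psi> g y \<in> Ftilde n \<Omega>" using group_action.element_image[OF ga2 g yF(1)] by blast
  moreover have "\<phi> g i \<in> fst (\<psi> g y)" using fstpsi[OF g yF(1)] yF(2) by auto
  ultimately show "\<psi> g y \<in> Ftilde_at n \<Omega> (\<phi> g i)" unfolding Ftilde_at_def by auto
  show "\<psi> (inv\<^bsub>G\<^esub> g) (\<psi> g y) = y" using group_action.orbit_sym_aux[OF ga2 g yF(1)] by blast
qed

lemma map_inv:
  assumes g: "g \<in> carrier G" and i: "i \<le> n" and x: "x \<in> Ftilde_at n \<Omega> (\<phi> g i)"
  shows "\<psi> (inv\<^bsub>G\<^esub> g) x \<in> Ftilde_at n \<Omega> i"
proof -
  have ig: "inv\<^bsub>G\<^esub> g \<in> carrier G" using grp g by (simp add: group.inv_closed)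
  have xF: "x \<in> Ftilde n \<Omega>" "\<phi> g i \<in> fst x" using x unfolding Ftilde_at_def by auto
  have "\<psi> (inv\<^bsub>G\<^esub> g) x \<in> Ftilde n \<Omega>" using group_action.element_image[OF ga2 ig xF(1)] by blast
  moreover have "\<phi> (inv\<^bsub>G\<^esub> g) (\<phi> g i) = i"
    using group_action.orbit_sym_aux[OF ga1 g] i by auto
  then have "i \<in> fst (\<psi> (inv\<^bsub>G\<^esub> g) x)" using fstpsi[OF ig xF(1)] xF(2) by force
  ultimately show ?thesis unfolding Ftilde_at_def by auto
qed

lemma gact_in:
  assumes g: "g \<in> carrier G" and i: "i \<le> n" and b: "\<beta> \<in> loc_idx n \<Omega> r i"
  shows "gact n \<Omega> G \<phi> \<psi> g i \<beta> \<in> loc_idx n \<Omega> r (\<phi> g i)"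
  using b map_inv[OF g i] unfolding loc_idx_def gact_def by (auto simp: PiE_iff)

lemma gact_app:
  assumes g: "g \<in> carrier G" and i: "i \<le> n" and y: "y \<in> Ftilde_at n \<Omega> i"
  shows "gact n \<Omega> G \<phi> \<psi> g i \<beta> (\<psi> g y) = \<beta> y"
  using map_fwd[OF g i y] unfolding gact_def by auto

lemma gact_inj:
  assumes g: "g \<in> carrier G" and i: "i \<le> n" and b: "\<beta> \<in> loc_idx n \<Omega> r i" "\<beta>' \<in> loc_idx n \<Omega> r i"
    and eq: "gact n \<Omega> G \<phi> \<psi> g i \<beta> = gact n \<Omega> G \<phi> \<psi> g i \<beta>'"
  shows "\<beta> = \<beta>'"
proof (rule extensionalityI[of _ "Ftilde_at n \<Omega> i"])
  show "\<beta> \<in> extensional (Ftilde_at n \<Omega> i)" "\<beta>' \<in> extensional (Ftilde_at n \<Omega> i)"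
    using b unfolding loc_idx_def by (auto simp: PiE_def)
  fix y assume y: "y \<in> Ftilde_at n \<Omega> i"
  show "\<beta> y = \<beta>' y" using gact_app[OF g i y, of \<beta>] gact_app[OF g i y, of \<beta>'] eq by simp
qed

end

lemma divmod_aux: "(b::nat) < r \<Longrightarrow> (a * r + b) div r = a \<and> (a * r + b) mod r = b"
  by (metis add.commute div_mult_self3 div_less mod_mult_self3 mod_less not_less_zero add_0 gr0I)

lemma inf_mono1:
  assumes "\<forall>r\<in>B. r \<in> A"
  shows "Inf (enat ` A) \<le> Inf (enat ` B)"
  using assms by (intro Inf_superset_mono) auto

lemma inf_mono2:
  assumes "\<forall>r\<in>B. r * r \<in> A"
  shows "Inf (enat ` A) \<le> (Inf (enat ` B))^2"
proof (cases "B = {}")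
  case True then show ?thesis by (simp add: power2_eq_square top_enat_def)
next
  case False
  then obtain b where b: "b \<in> B" by auto
  define m where "m = (LEAST x. x \<in> B)"
  have m: "m \<in> B" "\<And>x. x \<in> B \<Longrightarrow> m \<le> x"
    unfolding m_def using b by (auto intro: LeastI Least_le)
  have "Inf (enat ` B) = enat m"
    by (rule antisym) (auto intro!: Inf_lower Inf_greatest simp: m)
  moreover have "Inf (enat ` A) \<le> enat (m * m)" using assms m(1) by (auto intro: Inf_lower)
  ultimately show ?thesis by (simp add: power2_eq_square)
qed

lemma finite_Ftilde: "finite (Ftilde n \<Omega>)"
proof -
  have "Ftilde n \<Omega> = (SIGMA F:facets n \<Omega>. {..<\<Omega> F})" unfolding Ftilde_def by auto
  moreover have "facets n \<Omega> \<subseteq> Pow {..n}" unfolding facets_def simplex_def by auto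
  then have "finite (facets n \<Omega>)" by (rule finite_subset) auto
  ultimately show ?thesis by auto
qed

lemma res_in: "\<alpha> \<in> glob_idx n \<Omega> r \<Longrightarrow> res n \<Omega> \<alpha> k \<in> loc_idx n \<Omega> r k"
  unfolding glob_idx_def loc_idx_def res_def using Ftilde_at_sub[of n \<Omega> k] by (auto simp: PiE_iff)

lemma finite_Ftilde_at: "finite (Ftilde_at n \<Omega> k)"
  by (rule finite_subset[OF Ftilde_at_sub finite_Ftilde])

lemma finite_loc: "finite (loc_idx n \<Omega> r i)"
  unfolding loc_idx_def by (intro finite_PiE finite_Ftilde_at) auto
lemma finite_glob: "finite (glob_idx n \<Omega> r)"
  unfolding glob_idx_def by (intro finite_PiE finite_Ftilde) auto

context wga begin

lemma part2:
  assumes nn: "is_nn_decomp n \<Omega> G \<phi> \<psi> d M r w"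
  shows "\<exists>E. is_psd_decomp n \<Omega> G \<phi> \<psi> d M r E"
proof -
  define E where "E = (\<lambda>i j \<beta> \<beta>'. if \<beta> = \<beta>' \<and> \<beta> \<in> loc_idx n \<Omega> r i then w i \<beta> j else 0)"
  have dec: "is_decomp n \<Omega> G \<phi> \<psi> d M r w" and real: "\<And>i \<beta> j. i \<le> n \<Longrightarrow> \<beta> \<in> loc_idx n \<Omega> r i \<Longrightarrow> j < d i \<Longrightarrow> Im (w i \<beta> j) = 0 \<and> 0 \<le> Re (w i \<beta> j)"
    using nn unfolding is_nn_decomp_def by auto
  have P1: "psd_on (loc_idx n \<Omega> r i) (E i j)" if i: "i \<le> n" and j: "j < d i" for i j
  proof -
    have wr: "w i \<beta> j = complex_of_real (Re (w i \<beta> j))" if "\<beta> \<in> loc_idx n \<Omega> r i" for \<beta>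
      using real[OF i that j] by (simp add: complex_eq_iff)
    have herm: "\<forall>x\<in>loc_idx n \<Omega> r i. \<forall>y\<in>loc_idx n \<Omega> r i. E i j y x = cnj (E i j x y)"
      unfolding E_def using wr by (auto simp: complex_eq_iff)
    have q: "(\<Sum>x\<in>loc_idx n \<Omega> r i. \<Sum>y\<in>loc_idx n \<Omega> r i. cnj (v x) * E i j x y * v y)
       = complex_of_real (\<Sum>x\<in>loc_idx n \<Omega> r i. (cmod (v x))^2 * Re (w i x j))" for v
    proof -
      have "(\<Sum>x\<in>loc_idx n \<Omega> r i. \<Sum>y\<in>loc_idx n \<Omega> r i. cnj (v x) * E i j x y * v y)
         = (\<Sum>x\<in>loc_idx n \<Omega> r i. cnj (v x) * w i x j * v x)"
      proof (rule sum.cong[OF refl])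
        fix x assume x: "x \<in> loc_idx n \<Omega> r i"
        have "(\<Sum>y\<in>loc_idx n \<Omega> r i. cnj (v x) * E i j x y * v y)
          = (\<Sum>y\<in>loc_idx n \<Omega> r i. if x = y then cnj (v x) * w i x j * v x else 0)"
          by (rule sum.cong) (auto simp: E_def x)
        also have "\<dots> = cnj (v x) * w i x j * v x"
          using x finite_loc[of n \<Omega> r i] by (subst sum.delta') auto
        finally show "(\<Sum>y\<in>loc_idx n \<Omega> r i. cnj (v x) * E i j x y * v y) = cnj (v x) * w i x j * v x" .
      qed
      also have "\<dots> = (\<Sum>x\<in>loc_idx n \<Omega> r i. complex_of_real ((cmod (v x))^2 * Re (w i x j)))"
      proof (rule sum.cong[OF refl])
        fix x assume x: "x \<in> loc_idx n \<Omega> r i"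
        have "cnj (v x) * w i x j * v x = (v x * cnj (v x)) * w i x j" by (simp add: algebra_simps)
        also have "\<dots> = complex_of_real ((cmod (v x))^2) * complex_of_real (Re (w i x j))"
          using wr[OF x] by (simp add: complex_norm_square[symmetric])
        finally show "cnj (v x) * w i x j * v x = complex_of_real ((cmod (v x))^2 * Re (w i x j))" by simp
      qed
      also have "\<dots> = complex_of_real (\<Sum>x\<in>loc_idx n \<Omega> r i. (cmod (v x))^2 * Re (w i x j))" by simp
      finally show ?thesis .
    qed
    have "Im (\<Sum>x\<in>loc_idx n \<Omega> r i. \<Sum>y\<in>loc_idx n \<Omega> r i. cnj (v x) * E i j x y * v y) = 0 \<and>
          0 \<le> Re (\<Sum>x\<in>loc_idx n \<Omega> r i. \<Sum>y\<in>loc_idx n \<Omega> r i. cnj (v x) * E i j x y * v y)" for v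
    proof -
      have "0 \<le> (\<Sum>x\<in>loc_idx n \<Omega> r i. (cmod (v x))^2 * Re (w i x j))"
        using real[OF i _ j] by (intro sum_nonneg mult_nonneg_nonneg) auto
      then show ?thesis unfolding q by simp
    qed
    then show ?thesis unfolding psd_on_def Let_def using herm by blast
  qed
  have P2: "E (\<phi> g i) j (gact n \<Omega> G \<phi> \<psi> g i \<beta>) (gact n \<Omega> G \<phi> \<psi> g i \<beta>') = E i j \<beta> \<beta>'"
    if i: "i \<le> n" and g: "g \<in> carrier G" and j: "j < d i" and b: "\<beta> \<in> loc_idx n \<Omega> r i" "\<beta>' \<in> loc_idx n \<Omega> r i" for i g j \<beta> \<beta>'
  proof (cases "\<beta> = \<beta>'")
    case True
    then show ?thesis using gact_in[OF g i b(1)] b dec i g j unfolding E_def is_decomp_def by auto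
  next
    case False
    then have "gact n \<Omega> G \<phi> \<psi> g i \<beta> \<noteq> gact n \<Omega> G \<phi> \<psi> g i \<beta>'" using gact_inj[OF g i b] by blast
    then show ?thesis using False unfolding E_def by auto
  qed
  have P3: "M idx = (\<Sum>\<alpha>\<in>glob_idx n \<Omega> r. \<Sum>\<alpha>'\<in>glob_idx n \<Omega> r.
           \<Prod>k\<le>n. E k (idx k) (res n \<Omega> \<alpha> k) (res n \<Omega> \<alpha>' k))" if idx: "idx \<in> tidx n d" for idx
  proof -
    have "M idx = (\<Sum>\<alpha>\<in>glob_idx n \<Omega> r. \<Prod>k\<le>n. w k (res n \<Omega> \<alpha> k) (idx k))"
      using dec idx unfolding is_decomp_def by auto
    also have "\<dots> = (\<Sum>\<alpha>\<in>glob_idx n \<Omega> r. \<Sum>\<alpha>'\<in>glob_idx n \<Omega> r.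
           \<Prod>k\<le>n. E k (idx k) (res n \<Omega> \<alpha> k) (res n \<Omega> \<alpha>' k))"
    proof (rule sum.cong[OF refl])
      fix \<alpha> assume a: "\<alpha> \<in> glob_idx n \<Omega> r"
      have "(\<Sum>\<alpha>'\<in>glob_idx n \<Omega> r. \<Prod>k\<le>n. E k (idx k) (res n \<Omega> \<alpha> k) (res n \<Omega> \<alpha>' k))
         = (\<Sum>\<alpha>'\<in>glob_idx n \<Omega> r. if \<alpha> = \<alpha>' then (\<Prod>k\<le>n. w k (res n \<Omega> \<alpha> k) (idx k)) else 0)"
      proof (rule sum.cong[OF refl])
        fix \<alpha>' assume a': "\<alpha>' \<in> glob_idx n \<Omega> r"
        show "(\<Prod>k\<le>n. E k (idx k) (res n \<Omega> \<alpha> k) (res n \<Omega> \<alpha>' k))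
           = (if \<alpha> = \<alpha>' then (\<Prod>k\<le>n. w k (res n \<Omega> \<alpha> k) (idx k)) else 0)"
        proof (cases "\<alpha> = \<alpha>'")
          case True
          then show ?thesis using res_in[OF a] unfolding E_def by simp
        next
          case False
          have "\<exists>x\<in>Ftilde n \<Omega>. \<alpha> x \<noteq> \<alpha>' x"
          proof (rule ccontr)
            assume "\<not> ?thesis"
            then have "\<alpha> = \<alpha>'" using a a' unfolding glob_idx_def
              by (intro extensionalityI[of _ "Ftilde n \<Omega>"]) (auto simp: PiE_def)
            then show False using False by simp
          qed
          then obtain x where x: "x \<in> Ftilde n \<Omega>" "\<alpha> x \<noteq> \<alpha>' x" by auto
          obtain k where k: "k \<le> n" "x \<in> Ftilde_at n \<Omega> k" using facet_vertex[OF wsc x(1)] by auto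
          have "res n \<Omega> \<alpha> k \<noteq> res n \<Omega> \<alpha>' k"
          proof
            assume "res n \<Omega> \<alpha> k = res n \<Omega> \<alpha>' k"
            then have "res n \<Omega> \<alpha> k x = res n \<Omega> \<alpha>' k x" by simp
            then show False using k x unfolding res_def by simp
          qed
          then have "E k (idx k) (res n \<Omega> \<alpha> k) (res n \<Omega> \<alpha>' k) = 0" unfolding E_def by auto
          then have "(\<Prod>k\<le>n. E k (idx k) (res n \<Omega> \<alpha> k) (res n \<Omega> \<alpha>' k)) = 0"
            using k(1) by (intro prod_zero) auto
          then show ?thesis using False by simp
        qed
      qed
      also have "\<dots> = (\<Prod>k\<le>n. w k (res n \<Omega> \<alpha> k) (idx k))"
        using a finite_glob[of n \<Omega> r] by (simp add: sum.delta')
      finally show "(\<Prod>k\<le>n. w k (res n \<Omega> \<alpha> k) (idx k)) = (\<Sum>\<alpha>'\<in>glob_idx n \<Omega> r. \<Prod>k\<le>n. E k (idx k) (res n \<Omega> \<alpha> k) (res n \<Omega> \<alpha>' k))" by simp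
    qed
    finally show ?thesis .
  qed
  have "is_psd_decomp n \<Omega> G \<phi> \<psi> d M r E"
    unfolding is_psd_decomp_def using P1 P2 P3 by blast
  then show ?thesis by blast
qed


lemma part3:
  assumes pd: "is_psd_decomp n \<Omega> G \<phi> \<psi> d M r E"
  shows "\<exists>w. is_decomp n \<Omega> G \<phi> \<psi> d M (r * r) w"
proof -
  define Dv where "Dv = (\<lambda>A (\<beta>::nat set \<times> nat \<Rightarrow> nat). restrict (\<lambda>x. \<beta> x div r) A)"
  define Md where "Md = (\<lambda>A (\<beta>::nat set \<times> nat \<Rightarrow> nat). restrict (\<lambda>x. \<beta> x mod r) A)"
  define w where "w = (\<lambda>k \<beta> j. E k j (Dv (Ftilde_at n \<Omega> k) \<beta>) (Md (Ftilde_at n \<Omega> k) \<beta>))"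
  have inv: "E (\<phi> g i) j (gact n \<Omega> G \<phi> \<psi> g i \<beta>) (gact n \<Omega> G \<phi> \<psi> g i \<beta>') = E i j \<beta> \<beta>'"
    if "i \<le> n" "g \<in> carrier G" "j < d i" "\<beta> \<in> loc_idx n \<Omega> r i" "\<beta>' \<in> loc_idx n \<Omega> r i" for i g j \<beta> \<beta>'
    using pd that unfolding is_psd_decomp_def by blast
  have eqM: "M idx = (\<Sum>\<alpha>\<in>glob_idx n \<Omega> r. \<Sum>\<alpha>'\<in>glob_idx n \<Omega> r.
           \<Prod>k\<le>n. E k (idx k) (res n \<Omega> \<alpha> k) (res n \<Omega> \<alpha>' k))" if "idx \<in> tidx n d" for idx
    using pd that unfolding is_psd_decomp_def by blast
  have Dv_loc: "Dv (Ftilde_at n \<Omega> i) \<beta> \<in> loc_idx n \<Omega> r i" if "\<beta> \<in> loc_idx n \<Omega> (r*r) i" for i \<beta>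
    using that unfolding loc_idx_def Dv_def by (auto simp: PiE_iff less_mult_imp_div_less)
  have Md_loc: "Md (Ftilde_at n \<Omega> i) \<beta> \<in> loc_idx n \<Omega> r i" if "\<beta> \<in> loc_idx n \<Omega> (r*r) i" for i \<beta>
  proof -
    have "0 < r" if "x \<in> Ftilde_at n \<Omega> i" for x using \<open>\<beta> \<in> loc_idx n \<Omega> (r*r) i\<close> that
      unfolding loc_idx_def by (auto simp: PiE_iff) (metis mult_0 not_less_zero gr0I lessThan_iff)
    then show ?thesis unfolding loc_idx_def Md_def by (auto simp: PiE_iff)
  qed
  have Dv_g: "Dv (Ftilde_at n \<Omega> (\<phi> g i)) (gact n \<Omega> G \<phi> \<psi> g i \<beta>) = gact n \<Omega> G \<phi> \<psi> g i (Dv (Ftilde_at n \<Omega> i) \<beta>)"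
    if "i \<le> n" "g \<in> carrier G" for i g \<beta>
    using map_inv[OF that(2,1)] unfolding Dv_def gact_def by (intro restrict_ext) auto
  have Md_g: "Md (Ftilde_at n \<Omega> (\<phi> g i)) (gact n \<Omega> G \<phi> \<psi> g i \<beta>) = gact n \<Omega> G \<phi> \<psi> g i (Md (Ftilde_at n \<Omega> i) \<beta>)"
    if "i \<le> n" "g \<in> carrier G" for i g \<beta>
    using map_inv[OF that(2,1)] unfolding Md_def gact_def by (intro restrict_ext) auto
  have W2: "w i \<beta> j = w (\<phi> g i) (gact n \<Omega> G \<phi> \<psi> g i \<beta>) j"
    if "i \<le> n" "g \<in> carrier G" "\<beta> \<in> loc_idx n \<Omega> (r*r) i" "j < d i" for i g \<beta> j
    unfolding w_def Dv_g[OF that(1,2)] Md_g[OF that(1,2)]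
    using inv[OF that(1,2,4) Dv_loc[OF that(3)] Md_loc[OF that(3)]] by simp
  define Ft where "Ft = Ftilde n \<Omega>"
  define p where "p = (\<lambda>\<gamma>. (Dv Ft \<gamma>, Md Ft \<gamma>))"
  have resD: "Dv (Ftilde_at n \<Omega> k) (res n \<Omega> \<gamma> k) = res n \<Omega> (Dv Ft \<gamma>) k" for \<gamma> k
    using Ftilde_at_sub[of n \<Omega> k] unfolding Dv_def res_def Ft_def by (intro restrict_ext) auto
  have resM: "Md (Ftilde_at n \<Omega> k) (res n \<Omega> \<gamma> k) = res n \<Omega> (Md Ft \<gamma>) k" for \<gamma> k
    using Ftilde_at_sub[of n \<Omega> k] unfolding Md_def res_def Ft_def by (intro restrict_ext) auto
  have bij: "bij_betw p (glob_idx n \<Omega> (r*r)) (glob_idx n \<Omega> r \<times> glob_idx n \<Omega> r)"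
  proof (rule bij_betw_imageI)
    show "inj_on p (glob_idx n \<Omega> (r*r))"
    proof (rule inj_onI)
      fix \<gamma> \<gamma>' assume a: "\<gamma> \<in> glob_idx n \<Omega> (r*r)" "\<gamma>' \<in> glob_idx n \<Omega> (r*r)" and e: "p \<gamma> = p \<gamma>'"
      show "\<gamma> = \<gamma>'"
      proof (rule extensionalityI[of _ Ft])
        show "\<gamma> \<in> extensional Ft" "\<gamma>' \<in> extensional Ft" using a unfolding glob_idx_def Ft_def by (auto simp: PiE_def)
        fix x assume x: "x \<in> Ft"
        have e1: "Dv Ft \<gamma> = Dv Ft \<gamma>'" "Md Ft \<gamma> = Md Ft \<gamma>'" using e unfolding p_def by auto
        have "Dv Ft \<gamma> x = Dv Ft \<gamma>' x" "Md Ft \<gamma> x = Md Ft \<gamma>' x" using e1 by simp_all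
        then have "\<gamma> x div r = \<gamma>' x div r" "\<gamma> x mod r = \<gamma>' x mod r"
          using x unfolding Dv_def Md_def by simp_all
        note dm = this
        have "\<gamma> x = \<gamma> x div r * r + \<gamma> x mod r" by (rule div_mult_mod_eq[symmetric])
        also have "\<dots> = \<gamma>' x div r * r + \<gamma>' x mod r" by (simp only: dm)
        also have "\<dots> = \<gamma>' x" by (rule div_mult_mod_eq)
        finally show "\<gamma> x = \<gamma>' x" .
      qed
    qed
    show "p ` glob_idx n \<Omega> (r*r) = glob_idx n \<Omega> r \<times> glob_idx n \<Omega> r"
    proof
      show "p ` glob_idx n \<Omega> (r*r) \<subseteq> glob_idx n \<Omega> r \<times> glob_idx n \<Omega> r"
      proof
        fix z assume "z \<in> p ` glob_idx n \<Omega> (r*r)"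
        then obtain \<gamma> where g: "\<gamma> \<in> glob_idx n \<Omega> (r*r)" "z = p \<gamma>" by auto
        have "0 < r" if "x \<in> Ft" for x using g(1) that
          unfolding glob_idx_def Ft_def by (auto simp: PiE_iff) (metis mult_0 not_less_zero gr0I lessThan_iff)
        then show "z \<in> glob_idx n \<Omega> r \<times> glob_idx n \<Omega> r" using g
          unfolding glob_idx_def p_def Dv_def Md_def Ft_def by (auto simp: PiE_iff less_mult_imp_div_less)
      qed
      show "glob_idx n \<Omega> r \<times> glob_idx n \<Omega> r \<subseteq> p ` glob_idx n \<Omega> (r*r)"
      proof
        fix z assume z: "z \<in> glob_idx n \<Omega> r \<times> glob_idx n \<Omega> r"
        obtain a b where ab: "z = (a, b)" "a \<in> glob_idx n \<Omega> r" "b \<in> glob_idx n \<Omega> r" using z by auto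
        define \<gamma> where "\<gamma> = restrict (\<lambda>x. a x * r + b x) Ft"
        have lt: "a x * r + b x < r * r" if "x \<in> Ft" for x
        proof -
          have "a x < r" "b x < r" using ab that unfolding glob_idx_def Ft_def by auto
          then have "a x * r + b x < (a x + 1) * r" by simp
          also have "\<dots> \<le> r * r" using \<open>a x < r\<close> by (intro mult_right_mono) auto
          finally show ?thesis .
        qed
        have "\<gamma> \<in> glob_idx n \<Omega> (r*r)" using lt unfolding \<gamma>_def glob_idx_def Ft_def by auto
        moreover have "p \<gamma> = z"
        proof -
          have bl: "b x < r" if "x \<in> Ft" for x using ab that unfolding glob_idx_def Ft_def by auto
          have "Dv Ft \<gamma> = a"
            using ab(2) bl unfolding Dv_def \<gamma>_def glob_idx_def Ft_def
            by (intro extensionalityI[of _ "Ftilde n \<Omega>"]) (auto simp: PiE_def divmod_aux)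
          moreover have "Md Ft \<gamma> = b"
            using ab(3) bl unfolding Md_def \<gamma>_def glob_idx_def Ft_def
            by (intro extensionalityI[of _ "Ftilde n \<Omega>"]) (auto simp: PiE_def divmod_aux)
          ultimately show ?thesis unfolding p_def ab by simp
        qed
        ultimately show "z \<in> p ` glob_idx n \<Omega> (r*r)" by blast
      qed
    qed
  qed
  have W1: "M idx = (\<Sum>\<alpha>\<in>glob_idx n \<Omega> (r*r). \<Prod>k\<le>n. w k (res n \<Omega> \<alpha> k) (idx k))"
    if idx: "idx \<in> tidx n d" for idx
  proof -
    define h where "h = (\<lambda>(a, b). \<Prod>k\<le>n. E k (idx k) (res n \<Omega> a k) (res n \<Omega> b k))"
    have "(\<Sum>\<alpha>\<in>glob_idx n \<Omega> (r*r). \<Prod>k\<le>n. w k (res n \<Omega> \<alpha> k) (idx k))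
        = (\<Sum>\<alpha>\<in>glob_idx n \<Omega> (r*r). h (p \<alpha>))"
      unfolding w_def h_def p_def resD resM by simp
    also have "\<dots> = (\<Sum>z\<in>glob_idx n \<Omega> r \<times> glob_idx n \<Omega> r. h z)"
      using sum.reindex_bij_betw[OF bij, of h] by simp
    also have "\<dots> = (\<Sum>\<alpha>\<in>glob_idx n \<Omega> r. \<Sum>\<alpha>'\<in>glob_idx n \<Omega> r.
           \<Prod>k\<le>n. E k (idx k) (res n \<Omega> \<alpha> k) (res n \<Omega> \<alpha>' k))"
      unfolding h_def by (simp add: sum.cartesian_product)
    finally show ?thesis using eqM[OF idx] by simp
  qed
  have "is_decomp n \<Omega> G \<phi> \<psi> d M (r*r) w" unfolding is_decomp_def using W1 W2 by blast
  then show ?thesis by blast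
qed

end

theorem corollary5p4:
  fixes n :: nat and \<Omega> :: "nat set \<Rightarrow> nat" and G :: "'g monoid"
    and \<phi> :: "'g \<Rightarrow> nat \<Rightarrow> nat" and \<psi> :: "'g \<Rightarrow> nat set \<times> nat \<Rightarrow> nat set \<times> nat"
    and d :: "nat \<Rightarrow> nat" and M :: "(nat \<Rightarrow> nat) \<Rightarrow> complex"
  assumes "wsc_group_action n \<Omega> G \<phi> \<psi>"
    and "wsc_connected n \<Omega>"
    and "\<forall>i\<le>n. 0 < d i"
    and "\<forall>g\<in>carrier G. \<forall>i\<le>n. d (\<phi> g i) = d i"
  shows "rank_OG n \<Omega> G \<phi> \<psi> d M \<le> nn_rank_OG n \<Omega> G \<phi> \<psi> d M
       \<and> psd_rank_OG n \<Omega> G \<phi> \<psi> d M \<le> nn_rank_OG n \<Omega> G \<phi> \<psi> d M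
       \<and> rank_OG n \<Omega> G \<phi> \<psi> d M \<le> (psd_rank_OG n \<Omega> G \<phi> \<psi> d M) ^ 2"
proof -
  interpret wga n \<Omega> G \<phi> \<psi> using assms(1) by unfold_locales
  show ?thesis
    unfolding rank_OG_def nn_rank_OG_def psd_rank_OG_def
    using part2 part3 by (intro conjI inf_mono1 inf_mono2) (auto simp: is_nn_decomp_def)
qed

end
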